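(* For every $c\in\mathbb{N}$ there exists a planar graph $G$ such that for every tree-partition $\mathcal{P}$ of $G$ and every partition $\mathcal{Q}$ of $G$ with $|P\cap Q|\leq c$ for all $P\in\mathcal{P}$ and $Q\in\mathcal{Q}$, there is a $4$-clique $\{v_1,v_2,v_3,v_4\}$ in $G$ whose four vertices lie in four pairwise distinct parts of $\mathcal{Q}$.
   Context: All graphs are finite, simple and undirected. A partition $\mathcal{P}$ of a graph $G$ is a partition of $V(G)$ into parts. The quotient $G/\mathcal{P}$ is the graph whose vertices are the non-empty parts of $\mathcal{P}$, where distinct parts $P_1,P_2$ are adjacent iff some $v_1\in P_1$ and $v_2\in P_2$ satisfy $v_1v_2\in E(G)$. $\mathcal{P}$ is a tree-partition if $G/\mathcal{P}$ is isomorphic to a subgraph of a tree. *)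

theory Defs
  imports "HOL-Analysis.Analysis"
begin

definition simple_graph :: "'a set \<Rightarrow> 'a set set \<Rightarrow> bool" where
  "simple_graph V E \<longleftrightarrow> finite V \<and> (\<forall>e\<in>E. \<exists>u v. u \<in> V \<and> v \<in> V \<and> u \<noteq> v \<and> e = {u, v})"

definition planar :: "'a set \<Rightarrow> 'a set set \<Rightarrow> bool" where
  "planar V E \<longleftrightarrow> simple_graph V E \<and>
     (\<exists>(pos :: 'a \<Rightarrow> complex) (\<gamma> :: 'a set \<Rightarrow> real \<Rightarrow> complex).
        inj_on pos V \<and>
        (\<forall>e\<in>E. arc (\<gamma> e) \<and> {pathstart (\<gamma> e), pathfinish (\<gamma> e)} = pos ` e \<and>
                 path_image (\<gamma> e) \<inter> pos ` V = pos ` e) \<and>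
        (\<forall>e\<in>E. \<forall>f\<in>E. e \<noteq> f \<longrightarrow> path_image (\<gamma> e) \<inter> path_image (\<gamma> f) \<subseteq> pos ` (e \<inter> f)))"

text \<open>A partition of V into parts (parts are pairwise disjoint and cover V;
  empty parts are harmless and are ignored by the quotient).\<close>
definition is_partition :: "'a set \<Rightarrow> 'a set set \<Rightarrow> bool" where
  "is_partition V P \<longleftrightarrow> (\<forall>X\<in>P. X \<subseteq> V) \<and> \<Union>P = V \<and>
     (\<forall>X\<in>P. \<forall>Y\<in>P. X \<noteq> Y \<longrightarrow> X \<inter> Y = {})"

definition quotient_verts :: "'a set set \<Rightarrow> 'a set set" where
  "quotient_verts P = {X \<in> P. X \<noteq> {}}"

definition quotient_edges :: "'a set set \<Rightarrow> 'a set set \<Rightarrow> 'a set set set" where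
  "quotient_edges E P = {{X, Y} | X Y. X \<in> quotient_verts P \<and> Y \<in> quotient_verts P \<and> X \<noteq> Y \<and>
      (\<exists>x\<in>X. \<exists>y\<in>Y. {x, y} \<in> E)}"

definition connected_graph :: "'b set \<Rightarrow> 'b set set \<Rightarrow> bool" where
  "connected_graph V E \<longleftrightarrow> (\<forall>u\<in>V. \<forall>v\<in>V. (u, v) \<in> {(x, y). {x, y} \<in> E}\<^sup>*)"

definition is_cycle :: "'b set set \<Rightarrow> 'b list \<Rightarrow> bool" where
  "is_cycle E cs \<longleftrightarrow> length cs \<ge> 3 \<and> distinct cs \<and>
     (\<forall>i < length cs - 1. {cs ! i, cs ! (i + 1)} \<in> E) \<and> {last cs, hd cs} \<in> E"

definition is_tree :: "'b set \<Rightarrow> 'b set set \<Rightarrow> bool" where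
  "is_tree V E \<longleftrightarrow> V \<noteq> {} \<and> (\<forall>e\<in>E. \<exists>u v. u \<in> V \<and> v \<in> V \<and> u \<noteq> v \<and> e = {u, v}) \<and>
     connected_graph V E \<and> (\<nexists>cs. is_cycle E cs)"

definition iso_to_subgraph :: "'a set \<Rightarrow> 'a set set \<Rightarrow> 'b set \<Rightarrow> 'b set set \<Rightarrow> bool" where
  "iso_to_subgraph V E TV TE \<longleftrightarrow> (\<exists>f. inj_on f V \<and> f ` V \<subseteq> TV \<and> (\<forall>e\<in>E. f ` e \<in> TE))"

text \<open>Tree-partition: the quotient is isomorphic to a subgraph of a tree. The tree's vertices
  are taken from the type of parts plus nat (extra vertices), which is large enough.\<close>
definition tree_partition :: "'a set \<Rightarrow> 'a set set \<Rightarrow> 'a set set \<Rightarrow> bool" where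
  "tree_partition V E P \<longleftrightarrow> is_partition V P \<and>
     (\<exists>(TV :: ('a set + nat) set) TE. is_tree TV TE \<and>
        iso_to_subgraph (quotient_verts P) (quotient_edges E P) TV TE)"

end

theory Submission
  imports Defs "HOL-Library.Countable"
begin


definition rainbow :: "'a set set \<Rightarrow> 'a set set \<Rightarrow> bool" where
  "rainbow E Q \<longleftrightarrow> (\<exists>v1 v2 v3 v4 Q1 Q2 Q3 Q4.
         {v1, v2} \<in> E \<and> {v1, v3} \<in> E \<and> {v1, v4} \<in> E \<and>
         {v2, v3} \<in> E \<and> {v2, v4} \<in> E \<and> {v3, v4} \<in> E \<and>
         Q1 \<in> Q \<and> Q2 \<in> Q \<and> Q3 \<in> Q \<and> Q4 \<in> Q \<and>
         v1 \<in> Q1 \<and> v2 \<in> Q2 \<and> v3 \<in> Q3 \<and> v4 \<in> Q4 \<and>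
         Q1 \<noteq> Q2 \<and> Q1 \<noteq> Q3 \<and> Q1 \<noteq> Q4 \<and> Q2 \<noteq> Q3 \<and> Q2 \<noteq> Q4 \<and> Q3 \<noteq> Q4)"

definition book :: "'a set set \<Rightarrow> nat \<Rightarrow> 'a \<Rightarrow> 'a \<Rightarrow> 'a list \<Rightarrow> bool" where
  "book E m u w qs \<longleftrightarrow> {u,w} \<in> E \<and> length qs = m \<and> distinct qs \<and>
     (\<forall>q\<in>set qs. {u,q} \<in> E \<and> {w,q} \<in> E) \<and> successively (\<lambda>x y. {x,y} \<in> E) qs"

fun rich :: "'a set set \<Rightarrow> nat \<Rightarrow> nat \<Rightarrow> 'a \<Rightarrow> 'a \<Rightarrow> bool" where
  "rich E m 0 u w = (\<exists>qs. book E m u w qs)"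
| "rich E m (Suc n) u w = (\<exists>qs. book E m u w qs \<and> (\<forall>q\<in>set qs. rich E m n u q \<and> rich E m n w q))"

lemma book_sym: "book E m u w qs = book E m w u qs"
  unfolding book_def by (auto simp: insert_commute)

lemma rich_sym: "rich E m n u w = rich E m n w u"
  by (cases n) (auto simp: book_sym)

lemma rich_book: "rich E m n u w \<Longrightarrow> \<exists>qs. book E m u w qs"
  by (cases n) auto

lemma count_G:
  fixes f :: "'a \<Rightarrow> 'b"
  assumes "successively (\<lambda>x y. f x \<notin> B \<longrightarrow> f y \<notin> B \<longrightarrow> f x = f y) xs"
  shows "card (f ` {x\<in>set xs. f x \<notin> B}) \<le> length (filter (\<lambda>x. f x \<in> B) xs) + (if xs \<noteq> [] \<and> f (hd xs) \<notin> B then 1 else 0)"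
  using assms
proof (induction xs)
  case Nil then show ?case by simp
next
  case (Cons x xs)
  define S where "S = f ` {x\<in>set xs. f x \<notin> B}"
  define S' where "S' = f ` {y\<in>set (x#xs). f y \<notin> B}"
  define L where "L = length (filter (\<lambda>x. f x \<in> B) xs)"
  have s: "successively (\<lambda>x y. f x \<notin> B \<longrightarrow> f y \<notin> B \<longrightarrow> f x = f y) xs"
    using Cons.prems by (auto simp: successively_Cons)
  have IH: "card S \<le> L + (if xs \<noteq> [] \<and> f (hd xs) \<notin> B then 1 else 0)"
    using Cons.IH[OF s] unfolding S_def L_def .
  have fin: "finite S" unfolding S_def by simp
  have IH1: "card S \<le> L + 1" using IH by (simp split: if_splits)
  show ?case
  proof (cases "f x \<in> B")
    case True
    have "S' = S" using True unfolding S_def S'_def by auto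
    moreover have "length (filter (\<lambda>x. f x \<in> B) (x#xs)) = L + 1" using True unfolding L_def by simp
    ultimately show ?thesis using IH1 True unfolding S'_def by simp
  next
    case False
    have Lx: "length (filter (\<lambda>x. f x \<in> B) (x#xs)) = L" using False unfolding L_def by simp
    have eq: "S' = insert (f x) S" using False unfolding S_def S'_def by auto
    have "card S' \<le> L + 1"
    proof (cases "xs \<noteq> [] \<and> f (hd xs) \<notin> B")
      case True
      then have "f x = f (hd xs)" using Cons.prems False by (auto simp: successively_Cons)
      moreover have "hd xs \<in> set xs" using True by simp
      ultimately have "f x \<in> S" using True unfolding S_def by auto
      then have "S' = S" using eq by auto
      then show ?thesis using IH1 by simp
    next
      case F2: False
      have "card S' \<le> card S + 1" unfolding eq using fin by (simp add: card_insert_if)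
      moreover have "card S \<le> L" using IH F2 by simp
      ultimately show ?thesis by simp
    qed
    then show ?thesis using Lx False unfolding S'_def by simp
  qed
qed

lemma count_main:
  fixes f :: "'a \<Rightarrow> 'b"
  assumes dist: "distinct xs"
    and K: "\<And>y. card {x\<in>set xs. f x = y} \<le> K"
    and succ: "successively (\<lambda>x y. f x \<notin> {b1,b2} \<longrightarrow> f y \<notin> {b1,b2} \<longrightarrow> f x = f y) xs"
  shows "length xs \<le> 2*K + K*(2*K+1)"
proof -
  define gd where "gd = {x\<in>set xs. f x \<notin> {b1,b2}}"
  define bd where "bd = {x\<in>set xs. f x \<in> {b1,b2}}"
  have len: "length xs = card gd + card bd"
  proof -
    have "set xs = gd \<union> bd" "gd \<inter> bd = {}" by (auto simp: gd_def bd_def)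
    moreover have "card (gd \<union> bd) = card gd + card bd" by (rule card_Un_disjoint) (auto simp: gd_def bd_def)
    ultimately have "card (set xs) = card gd + card bd" by simp
    then show ?thesis using dist by (simp add: distinct_card)
  qed
  have "bd = {x\<in>set xs. f x = b1} \<union> {x\<in>set xs. f x = b2}" by (auto simp: bd_def)
  then have bdc: "card bd \<le> 2*K" using card_Un_le[of "{x\<in>set xs. f x = b1}" "{x\<in>set xs. f x = b2}"] K[of b1] K[of b2] by simp
  have "card bd = length (filter (\<lambda>x. f x \<in> {b1,b2}) xs)"
    using distinct_card[OF distinct_filter[OF dist, of "\<lambda>x. f x \<in> {b1,b2}"]] unfolding bd_def by simp
  then have Gc: "card (f ` gd) \<le> card bd + 1"
    using count_G[OF succ] unfolding gd_def by (auto split: if_splits)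
  have eq: "gd = (\<Union>y\<in>f ` gd. {x\<in>set xs. f x = y})" by (auto simp: gd_def)
  have "card gd \<le> (\<Sum>y\<in>f ` gd. card {x\<in>set xs. f x = y})"
    by (subst (1) eq, rule card_UN_le) (simp add: gd_def)
  also have "\<dots> \<le> card (f ` gd) * K" using sum_bounded_above[of "f ` gd" "\<lambda>y. card {x\<in>set xs. f x = y}" K] K by simp
  also have "\<dots> \<le> (2*K+1) * K" using Gc bdc by (intro mult_right_mono) auto
  finally have "card gd \<le> (2*K+1) * K" .
  then show ?thesis using len bdc by (simp add: algebra_simps)
qed

locale setting =
  fixes V :: "'a set" and E :: "'a set set" and P Q :: "'a set set" and c :: nat
  assumes fin: "finite V"
    and sg: "\<forall>e\<in>E. \<exists>u v. u \<in> V \<and> v \<in> V \<and> u \<noteq> v \<and> e = {u, v}"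
    and tp: "tree_partition V E P"
    and qp: "is_partition V Q"
    and bud: "\<forall>X\<in>P. \<forall>Y\<in>Q. card (X \<inter> Y) \<le> c"
begin

definition part :: "'a \<Rightarrow> 'a set" where "part v = (THE X. X \<in> P \<and> v \<in> X)"
definition col :: "'a \<Rightarrow> 'a set" where "col v = (THE X. X \<in> Q \<and> v \<in> X)"
abbreviation M where "M \<equiv> 8*c*c+6*c+1"

lemma pp: "is_partition V P" using tp unfolding tree_partition_def by (rule conjunct1)

lemma the_part: assumes "is_partition V R" "X \<in> R" "v \<in> X" shows "(THE X. X \<in> R \<and> v \<in> X) = X"
proof (rule the_equality)
  show "X \<in> R \<and> v \<in> X" using assms by blast
  fix Y assume "Y \<in> R \<and> v \<in> Y"
  then show "Y = X" using assms unfolding is_partition_def by blast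
qed

lemma ex_part: assumes "is_partition V R" "v \<in> V" shows "\<exists>X. X \<in> R \<and> v \<in> X"
proof -
  have "v \<in> \<Union>R" using assms unfolding is_partition_def by simp
  then show ?thesis by blast
qed

lemma part: assumes "v \<in> V" shows "part v \<in> P \<and> v \<in> part v"
proof -
  obtain X where X: "X \<in> P" "v \<in> X" using ex_part[OF pp assms] by blast
  then have "part v = X" unfolding part_def by (rule the_part[OF pp])
  then show ?thesis using X by simp
qed

lemma part_eq: "X \<in> P \<Longrightarrow> v \<in> X \<Longrightarrow> part v = X"
  unfolding part_def by (rule the_part[OF pp])

lemma col: assumes "v \<in> V" shows "col v \<in> Q \<and> v \<in> col v"
proof -
  obtain X where X: "X \<in> Q" "v \<in> X" using ex_part[OF qp assms] by blast
  then have "col v = X" unfolding col_def by (rule the_part[OF qp])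
  then show ?thesis using X by simp
qed

lemma edge_V: assumes "{u,v} \<in> E" shows "u \<in> V \<and> v \<in> V"
proof -
  obtain a b where ab: "a \<in> V" "b \<in> V" "{u,v} = {a,b}" using sg assms by blast
  have "u \<in> {a,b}" "v \<in> {a,b}" using ab(3) by blast+
  then show ?thesis using ab by blast
qed

lemma qe_intro: "X \<in> quotient_verts P \<Longrightarrow> Y \<in> quotient_verts P \<Longrightarrow> X \<noteq> Y \<Longrightarrow> x \<in> X \<Longrightarrow> y \<in> Y \<Longrightarrow> {x,y} \<in> E
  \<Longrightarrow> {X,Y} \<in> quotient_edges E P"
  unfolding quotient_edges_def by (intro CollectI exI[of _ X] exI[of _ Y]) blast

lemma tri: assumes "{u,v} \<in> E" "{v,w} \<in> E" "{u,w} \<in> E"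
  shows "part u = part v \<or> part v = part w \<or> part u = part w"
proof (rule ccontr)
  assume ne: "\<not> ?thesis"
  have V: "u \<in> V" "v \<in> V" "w \<in> V" using assms edge_V by blast+
  define X Y Z where "X = part u" "Y = part v" "Z = part w"
  have m: "X \<in> P" "u \<in> X" "Y \<in> P" "v \<in> Y" "Z \<in> P" "w \<in> Z" using part V unfolding X_Y_Z_def by auto
  have qv: "X \<in> quotient_verts P" "Y \<in> quotient_verts P" "Z \<in> quotient_verts P"
    using m unfolding quotient_verts_def by auto
  have ne': "X \<noteq> Y" "Y \<noteq> Z" "X \<noteq> Z" using ne unfolding X_Y_Z_def by auto
  have qe: "{X,Y} \<in> quotient_edges E P" "{Y,Z} \<in> quotient_edges E P" "{X,Z} \<in> quotient_edges E P"
    using qe_intro[OF qv(1) qv(2) ne'(1) m(2) m(4) assms(1)] qe_intro[OF qv(2) qv(3) ne'(2) m(4) m(6) assms(2)]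
      qe_intro[OF qv(1) qv(3) ne'(3) m(2) m(6) assms(3)] by auto
  obtain TV :: "('a set + nat) set" and TE f where t: "is_tree TV TE" "inj_on f (quotient_verts P)" "\<forall>e\<in>quotient_edges E P. f ` e \<in> TE"
    using tp unfolding tree_partition_def iso_to_subgraph_def by blast
  have d: "f X \<noteq> f Y" "f Y \<noteq> f Z" "f X \<noteq> f Z"
    using inj_onD[OF t(2) _ qv(1) qv(2)] inj_onD[OF t(2) _ qv(2) qv(3)] inj_onD[OF t(2) _ qv(1) qv(3)] ne'
    by blast+
  have "f ` {X,Y} \<in> TE" "f ` {Y,Z} \<in> TE" "f ` {X,Z} \<in> TE" using t(3) qe by blast+
  then have c: "{f X, f Y} \<in> TE" "{f Y, f Z} \<in> TE" "{f Z, f X} \<in> TE" by (simp_all add: insert_commute)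
  have "is_cycle TE [f X, f Y, f Z]"
    unfolding is_cycle_def
  proof (intro conjI allI impI)
    fix i assume "i < length [f X, f Y, f Z] - 1"
    then have "i = 0 \<or> i = 1" by auto
    then show "{[f X, f Y, f Z] ! i, [f X, f Y, f Z] ! (i + 1)} \<in> TE" using c by auto
  qed (use d c in auto)
  then show False using t(1) unfolding is_tree_def by blast
qed

lemma common: assumes "{u,w} \<in> E" "{u,q} \<in> E" "{w,q} \<in> E" "part u \<noteq> part w" shows "q \<in> part u \<union> part w"
proof -
  have "part u = part w \<or> part w = part q \<or> part u = part q" using tri[OF assms(1) assms(3) assms(2)] .
  then have "part q = part u \<or> part q = part w" using assms(4) by auto
  moreover have "q \<in> part q" using part edge_V assms(2) by blast
  ultimately show ?thesis by auto
qed

lemma budget2: "y \<in> Q \<Longrightarrow> a \<in> V \<Longrightarrow> b \<in> V \<Longrightarrow> card (y \<inter> (part a \<union> part b)) \<le> 2*c"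
proof -
  assume a: "y \<in> Q" "a \<in> V" "b \<in> V"
  have "card (y \<inter> (part a \<union> part b)) \<le> card (part a \<inter> y) + card (part b \<inter> y)"
    by (metis Int_Un_distrib Int_commute card_Un_le)
  also have "\<dots> \<le> c + c" using bud a part by (meson add_mono)
  finally show ?thesis by simp
qed

lemma fin_y: "y \<in> Q \<Longrightarrow> finite y"
  using qp fin unfolding is_partition_def by (meson finite_subset)

lemma book_win:
  assumes b: "book E M u w qs" and cd: "col u \<noteq> col w" and sub: "set qs \<subseteq> part a \<union> part b"
    and ab: "a \<in> V" "b \<in> V"
  shows "rainbow E Q"
proof -
  have uw: "u \<in> V" "w \<in> V" using b edge_V unfolding book_def by blast+
  have qV: "q \<in> V" if "q \<in> set qs" for q using b that edge_V unfolding book_def by blast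
  have K: "card {x\<in>set qs. col x = y} \<le> 2*c" for y
  proof (cases "\<exists>x\<in>set qs. col x = y")
    case True
    then obtain x where x: "x \<in> set qs" "col x = y" by blast
    then have yQ: "y \<in> Q" using col qV by blast
    have "{x\<in>set qs. col x = y} \<subseteq> y \<inter> (part a \<union> part b)" using sub col qV by blast
    moreover have "finite (y \<inter> (part a \<union> part b))" using fin_y yQ by blast
    ultimately show ?thesis using budget2[OF yQ ab] card_mono order_trans by blast
  next
    case False
    have e: "{x\<in>set qs. col x = y} = {}" using False by blast
    show ?thesis unfolding e by simp
  qed
  have "\<not> successively (\<lambda>x y. col x \<notin> {col u, col w} \<longrightarrow> col y \<notin> {col u, col w} \<longrightarrow> col x = col y) qs"
  proof
    assume "successively (\<lambda>x y. col x \<notin> {col u, col w} \<longrightarrow> col y \<notin> {col u, col w} \<longrightarrow> col x = col y) qs"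
    from count_main[OF _ K this] b have "M \<le> 2*(2*c) + 2*c*(2*(2*c)+1)" unfolding book_def by auto
    then show False by (simp add: algebra_simps)
  qed
  then obtain i where i: "Suc i < length qs" "col (qs!i) \<notin> {col u, col w}" "col (qs!Suc i) \<notin> {col u, col w}" "col (qs!i) \<noteq> col (qs!Suc i)"
    unfolding successively_conv_nth by blast
  have q: "qs!i \<in> set qs" "qs!Suc i \<in> set qs" using i(1) by auto
  have e: "{qs!i, qs!Suc i} \<in> E" using successively_nth[of "\<lambda>x y. {x,y} \<in> E" qs i] b i(1) unfolding book_def by blast
  have E6: "{u,w}\<in>E" "{u,qs!i}\<in>E" "{u,qs!Suc i}\<in>E" "{w,qs!i}\<in>E" "{w,qs!Suc i}\<in>E" "{qs!i,qs!Suc i}\<in>E"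
    using b q e unfolding book_def by auto
  have qv: "qs!i \<in> V" "qs!Suc i \<in> V" using q qV by auto
  have C: "col u \<in> Q \<and> u \<in> col u" "col w \<in> Q \<and> w \<in> col w" "col (qs!i) \<in> Q \<and> qs!i \<in> col (qs!i)"
     "col (qs!Suc i) \<in> Q \<and> qs!Suc i \<in> col (qs!Suc i)" using col uw qv by auto
  have D: "col u \<noteq> col (qs!i)" "col u \<noteq> col (qs!Suc i)" "col w \<noteq> col (qs!i)" "col w \<noteq> col (qs!Suc i)"
    using i by auto
  show ?thesis unfolding rainbow_def
    apply (rule exI[of _ u], rule exI[of _ w], rule exI[of _ "qs!i"], rule exI[of _ "qs!Suc i"])
    apply (rule exI[of _ "col u"], rule exI[of _ "col w"], rule exI[of _ "col (qs!i)"], rule exI[of _ "col (qs!Suc i)"])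
    using E6 C D cd i(4) by blast
qed

lemma book_facts: assumes "book E m u w qs"
  shows "u \<in> V" "w \<in> V" "\<And>q. q \<in> set qs \<Longrightarrow> q \<in> V" "\<And>q. q \<in> set qs \<Longrightarrow> {u,q} \<in> E"
    "\<And>q. q \<in> set qs \<Longrightarrow> {w,q} \<in> E" "{u,w} \<in> E" "card (set qs) = m"
proof -
  show e: "{u,w} \<in> E" using assms unfolding book_def by blast
  show "u \<in> V" using edge_V[OF e] by blast
  show "w \<in> V" using edge_V[OF e] by blast
  show e1: "\<And>q. q \<in> set qs \<Longrightarrow> {u,q} \<in> E" using assms unfolding book_def by blast
  show "\<And>q. q \<in> set qs \<Longrightarrow> {w,q} \<in> E" using assms unfolding book_def by blast
  show "\<And>q. q \<in> set qs \<Longrightarrow> q \<in> V" using edge_V[OF e1] by blast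
  show "card (set qs) = m" using assms unfolding book_def by (simp add: distinct_card)
qed

lemma book_sub: assumes "book E m u w qs" "part u \<noteq> part w" shows "set qs \<subseteq> part u \<union> part w"
proof
  fix q assume "q \<in> set qs"
  then show "q \<in> part u \<union> part w" using common[OF book_facts(6)[OF assms(1)] book_facts(4,5)[OF assms(1)] assms(2)] by blast
qed

lemma DD: assumes a: "rich E M n u w" "part u \<noteq> part w" "col u \<noteq> col w" shows "rainbow E Q"
proof -
  obtain qs where b: "book E M u w qs" using rich_book[OF a(1)] by blast
  show ?thesis using book_win[OF b a(3) book_sub[OF b a(2)] book_facts(1,2)[OF b]] .
qed

lemma SD: assumes a: "rich E M (Suc n) u w" "part u = part w" "col u \<noteq> col w" shows "rainbow E Q"
proof -
  obtain qs where b: "book E M u w qs" and ch: "\<forall>q\<in>set qs. rich E M n u q \<and> rich E M n w q" using a(1) by auto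
  note bf = book_facts[OF b]
  show ?thesis
  proof (cases "\<forall>q\<in>set qs. part q = part u")
    case True
    have "set qs \<subseteq> part u \<union> part u"
    proof
      fix q assume q: "q \<in> set qs"
      then have "q \<in> part q" using part bf(3) by blast
      then show "q \<in> part u \<union> part u" using True q by simp
    qed
    then show ?thesis using book_win[OF b a(3) _ bf(1) bf(1)] by blast
  next
    case False
    then obtain q where q: "q \<in> set qs" "part q \<noteq> part u" by blast
    have r: "rich E M n u q" "rich E M n w q" using ch q(1) by auto
    show ?thesis
    proof (cases "col q = col u")
      case True
      have "part w \<noteq> part q" "col w \<noteq> col q" using q a True by auto
      then show ?thesis by (rule DD[OF r(2)])
    next
      case False
      have "part u \<noteq> part q" "col u \<noteq> col q" using q a False by auto
      then show ?thesis by (rule DD[OF r(1)])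
    qed
  qed
qed

lemma DS: assumes a: "rich E M (Suc n) u w" "part u \<noteq> part w" "col u = col w" shows "rainbow E Q"
proof -
  obtain qs where b: "book E M u w qs" and ch: "\<forall>q\<in>set qs. rich E M n u q \<and> rich E M n w q" using a(1) by auto
  note bf = book_facts[OF b]
  have sub: "set qs \<subseteq> part u \<union> part w" using book_sub[OF b a(2)] .
  have cu: "col u \<in> Q" using col bf(1) by blast
  have "\<exists>q\<in>set qs. col q \<noteq> col u"
  proof (rule ccontr)
    assume na: "\<not> ?thesis"
    have "set qs \<subseteq> col u \<inter> (part u \<union> part w)"
    proof
      fix q assume q: "q \<in> set qs"
      then have "q \<in> col q" using col bf(3) by blast
      then show "q \<in> col u \<inter> (part u \<union> part w)" using na q sub by auto
    qed
    moreover have "finite (col u \<inter> (part u \<union> part w))" using fin_y[OF cu] by blast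
    ultimately have "card (set qs) \<le> card (col u \<inter> (part u \<union> part w))" by (intro card_mono)
    also have "\<dots> \<le> 2*c" using budget2[OF cu bf(1) bf(2)] .
    finally show False using bf(7) by simp
  qed
  then obtain q where q: "q \<in> set qs" "col q \<noteq> col u" by blast
  have qV: "q \<in> V" using bf(3) q(1) .
  have r: "rich E M n u q" "rich E M n w q" using ch q(1) by auto
  have pu: "part u \<in> P" "part w \<in> P" using part bf(1,2) by blast+
  have "q \<in> part u \<or> q \<in> part w" using q sub by blast
  then show ?thesis
  proof
    assume "q \<in> part u"
    then have "part q = part u" by (rule part_eq[OF pu(1)])
    then have "part w \<noteq> part q" "col w \<noteq> col q" using q a by auto
    then show ?thesis by (rule DD[OF r(2)])
  next
    assume "q \<in> part w"
    then have "part q = part w" by (rule part_eq[OF pu(2)])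
    then have "part u \<noteq> part q" "col u \<noteq> col q" using q a by auto
    then show ?thesis by (rule DD[OF r(1)])
  qed
qed

lemma SS: assumes a: "rich E M (Suc (Suc n)) u w" "part u = part w" "col u = col w" shows "rainbow E Q"
proof -
  obtain qs where b: "book E M u w qs" and ch: "\<forall>q\<in>set qs. rich E M (Suc n) u q \<and> rich E M (Suc n) w q" using a(1) by auto
  note bf = book_facts[OF b]
  have cu: "col u \<in> Q" using col bf(1) by blast
  show ?thesis
  proof (cases "\<exists>q\<in>set qs. part q \<noteq> part u")
    case True
    then obtain q where q: "q \<in> set qs" "part q \<noteq> part u" by blast
    have r: "rich E M (Suc n) u q" using ch q(1) by auto
    have pq: "part u \<noteq> part q" using q by auto
    show ?thesis
    proof (cases "col q = col u")
      case True
      then have "col u = col q" by simp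
      then show ?thesis by (rule DS[OF r pq])
    next
      case False
      then have "col u \<noteq> col q" by simp
      then show ?thesis by (rule DD[OF r pq])
    qed
  next
    case False
    have "\<exists>q\<in>set qs. col q \<noteq> col u"
    proof (rule ccontr)
      assume na: "\<not> ?thesis"
      have "set qs \<subseteq> col u \<inter> (part u \<union> part u)"
      proof
        fix q assume q: "q \<in> set qs"
        then have "q \<in> col q" "q \<in> part q" using col part bf(3) by blast+
        then show "q \<in> col u \<inter> (part u \<union> part u)" using na False q by auto
      qed
      moreover have "finite (col u \<inter> (part u \<union> part u))" using fin_y[OF cu] by blast
      ultimately have "card (set qs) \<le> card (col u \<inter> (part u \<union> part u))" by (intro card_mono)
      also have "\<dots> \<le> 2*c" using budget2[OF cu bf(1) bf(1)] .
      finally show False using bf(7) by simp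
    qed
    then obtain q where q: "q \<in> set qs" "col q \<noteq> col u" by blast
    then have "part q = part u" using False by blast
    then have "part u = part q" "col u \<noteq> col q" using q by auto
    moreover have r: "rich E M (Suc n) u q" using ch q(1) by auto
    ultimately show ?thesis using SD[OF r] by blast
  qed
qed

lemma main_comb: assumes "rich E M 2 u w" shows "rainbow E Q"
proof -
  have r: "rich E M (Suc (Suc 0)) u w" using assms by (simp add: numeral_2_eq_2)
  show ?thesis
  proof (cases "part u = part w"; cases "col u = col w")
    assume "part u = part w" "col u = col w" then show ?thesis using SS[OF r] by blast
  next
    assume "part u = part w" "col u \<noteq> col w" then show ?thesis using SD[OF r] by blast
  next
    assume "part u \<noteq> part w" "col u = col w" then show ?thesis using DS[OF r] by blast
  next
    assume "part u \<noteq> part w" "col u \<noteq> col w" then show ?thesis using DD[OF r] by blast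
  qed
qed

end


definition m0 :: complex where "m0 = Complex (1/3) (1/3)"

fun std :: "nat \<Rightarrow> complex" where
  "std 0 = 0" | "std (Suc 0) = 1" | "std _ = \<i>"

fun g :: "nat \<Rightarrow> complex \<Rightarrow> complex" where
  "g 0 z = Complex (Re z + Im z / 3) (Im z / 3)"
| "g (Suc 0) z = Complex (1/3 + 2 * Re z / 3 - Im z / 3) (1/3 - Re z / 3 + 2 * Im z / 3)"
| "g _ z = Complex (Re z / 3) (Re z / 3 + Im z)"

definition inT :: "complex \<Rightarrow> bool" where
  "inT z \<longleftrightarrow> Re z \<ge> 0 \<and> Im z \<ge> 0 \<and> Re z + Im z \<le> 1"
definition onS :: "complex \<Rightarrow> bool" where
  "onS z \<longleftrightarrow> inT z \<and> (Re z = 0 \<or> Im z = 0 \<or> Re z + Im z = 1)"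

lemma g_cases: "g k z = (if k = 0 then Complex (Re z + Im z / 3) (Im z / 3)
   else if k = 1 then Complex (1/3 + 2 * Re z / 3 - Im z / 3) (1/3 - Re z / 3 + 2 * Im z / 3)
   else Complex (Re z / 3) (Re z / 3 + Im z))"
proof (cases k)
  case (Suc n) then show ?thesis by (cases n) auto
qed auto

lemma g_affine: "g k ((1 - t) *\<^sub>R a + t *\<^sub>R b) = (1 - t) *\<^sub>R g k a + t *\<^sub>R g k b"
proof (cases k)
  case 0 then show ?thesis by (simp add: complex_eq_iff add_divide_distrib diff_divide_distrib algebra_simps)
next
  case (Suc n) then show ?thesis by (cases n) (simp_all add: complex_eq_iff add_divide_distrib diff_divide_distrib algebra_simps)
qed

lemma g_inj: "g k a = g k b \<Longrightarrow> a = b"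
  by (auto simp: g_cases complex_eq_iff split: if_splits)

lemma g_seg: "g k ` closed_segment a b = closed_segment (g k a) (g k b)"
  unfolding closed_segment_def
  by (auto simp: g_affine[symmetric]) 

lemma F1: "inT z \<Longrightarrow> inT (g k z)"
  by (auto simp: g_cases inT_def)

lemma F2: "j \<noteq> k \<Longrightarrow> inT z \<Longrightarrow> inT z' \<Longrightarrow> j < 3 \<Longrightarrow> k < 3 \<Longrightarrow> g j z = g k z' \<Longrightarrow> onS z"
  by (auto simp: g_cases inT_def onS_def complex_eq_iff split: if_splits)

lemma F3: "inT z \<Longrightarrow> onS (g k z) \<Longrightarrow> onS z"
  by (auto simp: g_cases inT_def onS_def split: if_splits)

lemma F3b: "z \<in> {0,1,\<i>} \<Longrightarrow> g k z \<in> {0,1,\<i>,m0}"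
  by (auto simp: g_cases m0_def complex_eq_iff)

lemma m0_notS: "\<not> onS m0" and m0_T: "inT m0"
  by (auto simp: onS_def inT_def m0_def)

lemma seg_coords: "p \<in> closed_segment a b \<Longrightarrow> \<exists>t. 0 \<le> t \<and> t \<le> 1 \<and> Re p = (1-t) * Re a + t * Re b \<and> Im p = (1-t) * Im a + t * Im b"
  unfolding closed_segment_def by auto

lemma std_cases: "j < 3 \<Longrightarrow> std j = 0 \<or> std j = 1 \<or> std j = \<i>"
  by (cases j rule: std.cases) auto

lemma F4: "inT z \<Longrightarrow> j < 3 \<Longrightarrow> g k z \<in> closed_segment m0 (std j) \<Longrightarrow> onS z"
proof -
  assume a: "inT z" "j < 3" "g k z \<in> closed_segment m0 (std j)"
  then obtain t where t: "0 \<le> t" "t \<le> 1" "Re (g k z) = (1-t) * Re m0 + t * Re (std j)" "Im (g k z) = (1-t) * Im m0 + t * Im (std j)"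
    using seg_coords by blast
  show ?thesis using a(1) std_cases[OF a(2)] t
    apply (auto simp: g_cases inT_def onS_def m0_def field_simps split: if_splits)
    done
qed

lemma F5a: "j < 3 \<Longrightarrow> p \<in> closed_segment m0 (std j) \<Longrightarrow> inT p"
proof -
  assume a: "j < 3" "p \<in> closed_segment m0 (std j)"
  then obtain t where t: "0 \<le> t" "t \<le> 1" "Re p = (1-t) * Re m0 + t * Re (std j)" "Im p = (1-t) * Im m0 + t * Im (std j)"
    using seg_coords by blast
  show ?thesis using std_cases[OF a(1)] t
    by (auto simp: inT_def m0_def field_simps)
qed

lemma F5b: "j < 3 \<Longrightarrow> p \<in> closed_segment m0 (std j) \<Longrightarrow> onS p \<or> p \<in> {0,1,\<i>,m0} \<Longrightarrow> p = m0 \<or> p = std j"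
proof -
  assume a: "j < 3" "p \<in> closed_segment m0 (std j)" "onS p \<or> p \<in> {0,1,\<i>,m0}"
  then obtain t where t: "0 \<le> t" "t \<le> 1" "Re p = (1-t) * Re m0 + t * Re (std j)" "Im p = (1-t) * Im m0 + t * Im (std j)"
    using seg_coords by blast
  show ?thesis using std_cases[OF a(1)] t a(3)
    apply (auto simp: inT_def onS_def m0_def complex_eq_iff field_simps)
    done
qed

lemma F6: "j < 3 \<Longrightarrow> j' < 3 \<Longrightarrow> j \<noteq> j' \<Longrightarrow> p \<in> closed_segment m0 (std j) \<Longrightarrow> p \<in> closed_segment m0 (std j') \<Longrightarrow> p = m0"
proof -
  assume a: "j < 3" "j' < 3" "j \<noteq> j'" "p \<in> closed_segment m0 (std j)" "p \<in> closed_segment m0 (std j')"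
  then obtain t where t: "0 \<le> t" "t \<le> 1" "Re p = (1-t) * Re m0 + t * Re (std j)" "Im p = (1-t) * Im m0 + t * Im (std j)"
    using seg_coords by blast
  obtain s where s: "0 \<le> s" "s \<le> 1" "Re p = (1-s) * Re m0 + s * Re (std j')" "Im p = (1-s) * Im m0 + s * Im (std j')"
    using a seg_coords by blast
  have "std j \<noteq> std j'" using a(1-3) by (cases j rule: std.cases; cases j' rule: std.cases) auto
  then show ?thesis using std_cases[OF a(1)] std_cases[OF a(2)] t s
    apply (auto simp: m0_def complex_eq_iff field_simps)
    done
qed

lemma F7: "inT z \<Longrightarrow> g k z = m0 \<Longrightarrow> onS z"
  by (auto simp: g_cases inT_def onS_def m0_def complex_eq_iff split: if_splits)


definition Wd :: "nat \<Rightarrow> nat list set" where "Wd d = {u. set u \<subseteq> {0,1,2} \<and> length u < d}"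

fun G :: "nat list \<Rightarrow> complex \<Rightarrow> complex" where
  "G [] z = z" | "G (k # w) z = G w (g k z)"

lemma G_snoc: "G (w @ [k]) z = g k (G w z)"
  by (induction w arbitrary: z) auto

abbreviation sg :: "nat list \<Rightarrow> nat \<Rightarrow> complex set" where
  "sg u j \<equiv> closed_segment (G u m0) (G u (std j))"

lemma sg_snoc: "sg (u @ [k]) j = g k ` sg u j"
  by (simp add: G_snoc g_seg)

lemma Wd_cases: "u \<in> Wd (Suc d) \<Longrightarrow> u = [] \<or> (\<exists>u0 k. u = u0 @ [k] \<and> u0 \<in> Wd d \<and> k < 3)"
  by (cases u rule: rev_cases) (auto simp: Wd_def)

lemma Wd_snoc: "u0 \<in> Wd d \<Longrightarrow> k < 3 \<Longrightarrow> u0 @ [k] \<in> Wd (Suc d)"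
  by (auto simp: Wd_def)

lemma Wd_nil: "[] \<in> Wd (Suc d)" by (simp add: Wd_def)

lemma inv_a: "u \<in> Wd d \<Longrightarrow> j < 3 \<Longrightarrow> p \<in> sg u j \<Longrightarrow> inT p"
proof (induction d arbitrary: u p)
  case 0 then show ?case by (simp add: Wd_def)
next
  case (Suc d)
  from Wd_cases[OF Suc.prems(1)] show ?case
  proof
    assume "u = []" then show ?thesis using Suc.prems F5a by simp
  next
    assume "\<exists>u0 k. u = u0 @ [k] \<and> u0 \<in> Wd d \<and> k < 3"
    then obtain u0 k where u: "u = u0 @ [k]" "u0 \<in> Wd d" by blast
    then obtain p0 where "p = g k p0" "p0 \<in> sg u0 j" using Suc.prems by (auto simp: sg_snoc)
    then show ?thesis using Suc.IH[OF u(2) Suc.prems(2)] F1 by blast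
  qed
qed

lemma inv_b: "u \<in> Wd d \<Longrightarrow> j < 3 \<Longrightarrow> p \<in> sg u j \<Longrightarrow> onS p \<Longrightarrow> p \<in> {G u m0, G u (std j)} \<and> p \<in> {0,1,\<i>}"
proof (induction d arbitrary: u p)
  case 0 then show ?case by (simp add: Wd_def)
next
  case (Suc d)
  from Wd_cases[OF Suc.prems(1)] show ?case
  proof
    assume u: "u = []"
    then have "p = m0 \<or> p = std j" using Suc.prems F5b by simp
    then have "p = std j" using Suc.prems(4) m0_notS by blast
    then show ?thesis using u std_cases[OF Suc.prems(2)] by auto
  next
    assume "\<exists>u0 k. u = u0 @ [k] \<and> u0 \<in> Wd d \<and> k < 3"
    then obtain u0 k where u: "u = u0 @ [k]" "u0 \<in> Wd d" by blast
    then obtain p0 where p0: "p = g k p0" "p0 \<in> sg u0 j" using Suc.prems by (auto simp: sg_snoc)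
    have "inT p0" using inv_a[OF u(2) Suc.prems(2) p0(2)] .
    then have "onS p0" using F3 Suc.prems(4) p0(1) by blast
    then have h: "p0 \<in> {G u0 m0, G u0 (std j)} \<and> p0 \<in> {0,1,\<i>}" using Suc.IH[OF u(2) Suc.prems(2) p0(2)] by blast
    then have "p \<in> {0,1,\<i>,m0}" using F3b p0(1) by blast
    moreover have "p \<noteq> m0" using Suc.prems(4) m0_notS by blast
    ultimately show ?thesis using h p0(1) u(1) by (auto simp: G_snoc)
  qed
qed

lemma inv_d1: "u \<in> Wd d \<Longrightarrow> inT (G u m0) \<and> \<not> onS (G u m0)"
proof (induction d arbitrary: u)
  case 0 then show ?case by (simp add: Wd_def)
next
  case (Suc d)
  from Wd_cases[OF Suc.prems(1)] show ?case
  proof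
    assume "u = []" then show ?thesis using m0_T m0_notS by simp
  next
    assume "\<exists>u0 k. u = u0 @ [k] \<and> u0 \<in> Wd d \<and> k < 3"
    then obtain u0 k where u: "u = u0 @ [k]" "u0 \<in> Wd d" by blast
    then show ?thesis using Suc.IH[OF u(2)] F1 F3 by (auto simp: G_snoc)
  qed
qed

lemma inv_d2: "inj_on (\<lambda>u. G u m0) (Wd d)"
proof (induction d)
  case 0 then show ?case by (simp add: Wd_def)
next
  case (Suc d)
  show ?case
  proof (rule inj_onI)
    fix u u' assume uu: "u \<in> Wd (Suc d)" "u' \<in> Wd (Suc d)" "G u m0 = G u' m0"
    have nil: False if "u0 \<in> Wd d" "G [] m0 = G (u0 @ [k]) m0" for u0 k
    proof -
      have "g k (G u0 m0) = m0" using that(2) by (simp add: G_snoc)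
      then show False using inv_d1[OF that(1)] F7 by blast
    qed
    from Wd_cases[OF uu(1)] Wd_cases[OF uu(2)] show "u = u'"
    proof (elim disjE exE conjE)
      fix u0 k u0' k' assume a: "u = u0 @ [k]" "u0 \<in> Wd d" "k < 3" "u' = u0' @ [k']" "u0' \<in> Wd d" "k' < 3"
      have e: "g k (G u0 m0) = g k' (G u0' m0)" using uu(3) a by (simp add: G_snoc)
      show "u = u'"
      proof (cases "k = k'")
        case True
        then have "G u0 m0 = G u0' m0" using e g_inj by blast
        then show ?thesis using Suc.IH a True by (auto dest: inj_onD)
      next
        case False
        then show ?thesis using F2[OF False _ _ a(3) a(6) e] inv_d1[OF a(2)] inv_d1[OF a(5)] by blast
      qed
    qed (use nil nil[OF _ sym] uu(3) in auto)
  qed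
qed

lemma inv_c: "u \<in> Wd d \<Longrightarrow> u' \<in> Wd d \<Longrightarrow> j < 3 \<Longrightarrow> j' < 3 \<Longrightarrow> (u, j) \<noteq> (u', j') \<Longrightarrow>
   p \<in> sg u j \<Longrightarrow> p \<in> sg u' j' \<Longrightarrow> p \<in> {G u m0, G u (std j)} \<and> p \<in> {G u' m0, G u' (std j')}"
proof (induction d arbitrary: u u' p)
  case 0 then show ?case by (simp add: Wd_def)
next
  case (Suc d)
  have cv: "p \<in> {G [] m0, G [] (std j)} \<and> p \<in> {G (u0 @ [k]) m0, G (u0 @ [k]) (std j')}"
    if h: "u0 \<in> Wd d" "k < 3" "j < 3" "j' < 3" "p \<in> sg [] j" "p \<in> sg (u0 @ [k]) j'" for u0 k j j' p
  proof -
    obtain p0 where p0: "p = g k p0" "p0 \<in> sg u0 j'" using h(6) unfolding sg_snoc by blast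
    have "inT p0" using inv_a[OF h(1) h(4) p0(2)] .
    then have "onS p0" using F4 h p0 by auto
    then have hh: "p0 \<in> {G u0 m0, G u0 (std j')} \<and> p0 \<in> {0,1,\<i>}" using inv_b[OF h(1) h(4) p0(2)] by blast
    then have "p \<in> {0,1,\<i>,m0}" using F3b p0(1) by blast
    then have "p = m0 \<or> p = std j" using F5b h by simp
    then show ?thesis using hh p0(1) by (auto simp: G_snoc)
  qed
  from Wd_cases[OF Suc.prems(1)] Wd_cases[OF Suc.prems(2)] show ?case
  proof (elim disjE exE conjE)
    assume "u = []" "u' = []"
    then show ?thesis using Suc.prems F6 by auto
  next
    fix u0 k assume "u = []" "u' = u0 @ [k]" "u0 \<in> Wd d" "k < 3"
    then show ?thesis using cv Suc.prems by blast
  next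
    fix u0 k assume "u' = []" "u = u0 @ [k]" "u0 \<in> Wd d" "k < 3"
    then show ?thesis using cv[of u0 k j' j] Suc.prems by blast
  next
    fix u0 k u0' k' assume a: "u = u0 @ [k]" "u0 \<in> Wd d" "k < 3" "u' = u0' @ [k']" "u0' \<in> Wd d" "k' < 3"
    obtain p0 where p0: "p = g k p0" "p0 \<in> sg u0 j" using Suc.prems a by (auto simp: sg_snoc)
    obtain p0' where p0': "p = g k' p0'" "p0' \<in> sg u0' j'" using Suc.prems a by (auto simp: sg_snoc)
    show ?thesis
    proof (cases "k = k'")
      case True
      then have "p0 = p0'" using p0 p0' g_inj by blast
      moreover have "(u0, j) \<noteq> (u0', j')" using Suc.prems(5) a True by auto
      ultimately have "p0 \<in> {G u0 m0, G u0 (std j)} \<and> p0 \<in> {G u0' m0, G u0' (std j')}"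
        using Suc.IH[OF a(2) a(5) Suc.prems(3,4)] p0 p0' by blast
      then show ?thesis using p0 p0' a True by (auto simp: G_snoc)
    next
      case False
      have i: "inT p0" "inT p0'" using inv_a a p0 p0' Suc.prems by blast+
      have "onS p0" using F2[OF False i a(3) a(6)] p0 p0' by simp
      moreover have "onS p0'" using F2[of k' k p0' p0] False i a p0 p0' by simp
      ultimately show ?thesis using inv_b[OF a(2) Suc.prems(3) p0(2)] inv_b[OF a(5) Suc.prems(4) p0'(2)] p0 p0' a
        by (auto simp: G_snoc)
    qed
  qed
qed


type_synonym vx = "nat + nat list"

fun cor :: "nat list \<Rightarrow> nat \<Rightarrow> vx" where
  "cor [] j = Inl j"
| "cor (k # w) j = (if k = 0 then (if j = 2 then Inr w else cor w j)
                    else if k = 1 then (if j = 0 then Inr w else cor w j)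
                    else (if j = 1 then Inr w else cor w j))"

definition VA :: "nat \<Rightarrow> vx set" where "VA D = Inl ` {0,1,2} \<union> Inr ` Wd D"
definition EA :: "nat \<Rightarrow> vx set set" where
  "EA D = {{Inl 0, Inl 1}, {Inl 1, Inl 2}, {Inl 0, Inl 2}} \<union> {{Inr u, cor u j} | u j. u \<in> Wd D \<and> j < 3}"

fun pos :: "vx \<Rightarrow> complex" where
  "pos (Inl j) = std j" | "pos (Inr u) = G u m0"

lemma g_std: "j < 3 \<Longrightarrow> g k (std j) = (if (k = 0 \<and> j = 2) \<or> (k = 1 \<and> j = 0) \<or> (k \<noteq> 0 \<and> k \<noteq> 1 \<and> j = 1) then m0 else std j)"
  by (cases j rule: std.cases; auto simp: g_cases m0_def complex_eq_iff)

lemma pos_cor: "j < 3 \<Longrightarrow> pos (cor u j) = G u (std j)"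
  by (induction u) (auto simp: g_std)

lemma cor_cases: "cor u j = Inl j \<or> (\<exists>v w'. v \<noteq> [] \<and> u = v @ w' \<and> cor u j = Inr w')"
proof (induction u)
  case Nil then show ?case by simp
next
  case (Cons k w)
  show ?case
  proof (cases "cor (k # w) j = Inr w")
    case True then show ?thesis by (intro disjI2 exI[of _ "[k]"] exI[of _ w]) simp
  next
    case False
    then have "cor (k#w) j = cor w j" by (auto split: if_splits)
    from Cons.IH show ?thesis
    proof
      assume "cor w j = Inl j" then show ?thesis using \<open>cor (k#w) j = cor w j\<close> by simp
    next
      assume "\<exists>v w'. v \<noteq> [] \<and> w = v @ w' \<and> cor w j = Inr w'"
      then obtain v w' where "v \<noteq> []" "w = v @ w'" "cor w j = Inr w'" by blast
      then show ?thesis using \<open>cor (k#w) j = cor w j\<close> by (intro disjI2 exI[of _ "k#v"] exI[of _ w']) simp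
    qed
  qed
qed

lemma Wd_suffix: "v @ w' \<in> Wd D \<Longrightarrow> w' \<in> Wd D"
  by (auto simp: Wd_def)

lemma cor_VA: assumes "u \<in> Wd D" "j < 3" shows "cor u j \<in> VA D"
proof -
  have "j \<in> {0,1,2}" using assms(2) by auto
  then show ?thesis using cor_cases[of u j] Wd_suffix assms(1) unfolding VA_def by auto
qed

lemma cor_ne: "cor u j \<noteq> Inr u"
  using cor_cases[of u j] by auto

lemma finite_Wd: "finite (Wd D)"
proof -
  have "Wd D \<subseteq> {xs. set xs \<subseteq> {0,1,2} \<and> length xs \<le> D}" by (auto simp: Wd_def)
  then show ?thesis using finite_lists_length_le[of "{0::nat,1,2}" D] finite_subset by blast
qed

lemma EA_cases: "e \<in> EA D \<Longrightarrow> e = {Inl 0, Inl 1} \<or> e = {Inl 1, Inl 2} \<or> e = {Inl 0, Inl 2} \<or> (\<exists>u j. u \<in> Wd D \<and> j < 3 \<and> e = {Inr u, cor u j})"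
  unfolding EA_def by blast

lemma Inl_VA: "j < 3 \<Longrightarrow> Inl j \<in> VA D" by (auto simp: VA_def)
lemma Inr_VA: "u \<in> Wd D \<Longrightarrow> Inr u \<in> VA D" by (auto simp: VA_def)

lemma outer_sg: "a < 3 \<Longrightarrow> b < 3 \<Longrightarrow> a \<noteq> b \<Longrightarrow> \<exists>x y. x \<in> VA D \<and> y \<in> VA D \<and> x \<noteq> y \<and> {Inl a, Inl b} = {x, y}"
  by (rule exI[of _ "Inl a"], rule exI[of _ "Inl b"]) (auto intro: Inl_VA)

lemma EA_sg: assumes "e \<in> EA D" shows "\<exists>x y. x \<in> VA D \<and> y \<in> VA D \<and> x \<noteq> y \<and> e = {x, y}"
  using EA_cases[OF assms]
proof (elim disjE exE conjE)
  fix u j assume "u \<in> Wd D" "j < 3" "e = {Inr u, cor u j}"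
  then show ?thesis using Inr_VA cor_VA cor_ne[of u j, symmetric] by blast
next
  assume "e = {Inl 0, Inl 1}" then show ?thesis using outer_sg[of 0 1] by simp
next
  assume "e = {Inl 1, Inl 2}" then show ?thesis using outer_sg[of 1 2] by simp
next
  assume "e = {Inl 0, Inl 2}" then show ?thesis using outer_sg[of 0 2] by simp
qed


lemma std2: "std 2 = \<i>" by (simp add: numeral_2_eq_2)

lemma std_onS: "j < 3 \<Longrightarrow> onS (std j)"
  using std_cases[of j] by (auto simp: onS_def inT_def)

lemma VA_cases: "x \<in> VA D \<Longrightarrow> (\<exists>a<3. x = Inl a) \<or> (\<exists>u\<in>Wd D. x = Inr u)"
  unfolding VA_def by auto

lemma std_inj: "a < 3 \<Longrightarrow> b < 3 \<Longrightarrow> std a = std b \<Longrightarrow> a = b"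
  by (cases a rule: std.cases; cases b rule: std.cases) (auto simp: complex_eq_iff)

lemma pos_inj: "inj_on pos (VA D)"
proof (rule inj_onI)
  fix x y assume xy: "x \<in> VA D" "y \<in> VA D" "pos x = pos y"
  have no: False if "a < 3" "u \<in> Wd D" "std a = G u m0" for a u
    using std_onS[OF that(1)] inv_d1[OF that(2)] that(3) by simp
  from VA_cases[OF xy(1)] VA_cases[OF xy(2)] show "x = y"
  proof (elim disjE exE bexE conjE)
    fix a b assume "a < 3" "x = Inl a" "b < 3" "y = Inl b" then show ?thesis using xy(3) std_inj by auto
  next
    fix a u assume "a < 3" "x = Inl a" "u \<in> Wd D" "y = Inr u" then show ?thesis using xy(3) no by auto
  next
    fix a u assume h: "a < 3" "y = Inl a" "u \<in> Wd D" "x = Inr u"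
    then have "std a = G u m0" using xy(3) by simp
    then show ?thesis using no h by blast
  next
    fix u v assume "u \<in> Wd D" "x = Inr u" "v \<in> Wd D" "y = Inr v" then show ?thesis using xy(3) inv_d2[of D] by (auto dest: inj_onD)
  qed
qed

definition segE :: "vx set \<Rightarrow> complex set" where "segE e = convex hull (pos ` e)"

lemma segE_pair: "segE {x,y} = closed_segment (pos x) (pos y)"
  by (simp add: segE_def segment_convex_hull)

lemma side01: "p \<in> closed_segment 0 1 \<Longrightarrow> Im p = 0 \<and> 0 \<le> Re p \<and> Re p \<le> 1"
  using seg_coords[of p 0 1] by auto
lemma side12: "p \<in> closed_segment 1 \<i> \<Longrightarrow> Re p + Im p = 1 \<and> 0 \<le> Re p \<and> 0 \<le> Im p"
  using seg_coords[of p 1 \<i>] by auto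
lemma side02: "p \<in> closed_segment 0 \<i> \<Longrightarrow> Re p = 0 \<and> 0 \<le> Im p \<and> Im p \<le> 1"
  using seg_coords[of p 0 \<i>] by auto

lemma EA_sub: "e \<in> EA D \<Longrightarrow> e \<subseteq> VA D"
  using EA_sg by blast

lemma common_pt: "e \<subseteq> VA D \<Longrightarrow> f \<subseteq> VA D \<Longrightarrow> p \<in> pos ` e \<Longrightarrow> p \<in> pos ` f \<Longrightarrow> p \<in> pos ` (e \<inter> f)"
  using pos_inj[of D] by (auto dest: inj_onD)

lemma inner_seg: "j < 3 \<Longrightarrow> segE {Inr u, cor u j} = sg u j"
  by (simp add: segE_pair pos_cor)

lemma inner_pos: "j < 3 \<Longrightarrow> pos ` {Inr u, cor u j} = {G u m0, G u (std j)}"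
  by (simp add: pos_cor)

lemma outer_inner:
  assumes "u \<in> Wd D" "j < 3" "p \<in> segE {Inr u, cor u j}"
    and "(a = 0 \<and> b = 1) \<or> (a = 1 \<and> b = 2) \<or> (a = 0 \<and> b = 2)" "p \<in> segE {Inl a, Inl b}"
  shows "p \<in> pos ` {Inr u, cor u j} \<and> p \<in> pos ` {Inl a, Inl b}"
proof -
  have s: "p \<in> sg u j" using assms inner_seg by auto
  have ps: "p \<in> closed_segment (std a) (std b)" using assms(5) by (simp add: segE_pair)
  have "onS p" using assms(4) ps side01 side12 side02 by (auto simp: std2 onS_def inT_def)
  then have h: "p \<in> {G u m0, G u (std j)} \<and> p \<in> {0,1,\<i>}" using inv_b[OF assms(1,2) s] by blast
  have "p \<in> {std a, std b}"
  proof -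
    consider "a = 0" "b = 1" | "a = 1" "b = 2" | "a = 0" "b = 2" using assms(4) by blast
    then show ?thesis
    proof cases
      case 1 then show ?thesis using h side01[of p] ps by (auto simp: complex_eq_iff)
    next
      case 2 then show ?thesis using h side12[of p] ps by (auto simp: std2 complex_eq_iff)
    next
      case 3 then show ?thesis using h side02[of p] ps by (auto simp: std2 complex_eq_iff)
    qed
  qed
  then show ?thesis using h inner_pos[OF assms(2)] by auto
qed

lemma std1: "std 1 = 1" by simp
lemma c1: "Im p = 0 \<Longrightarrow> Re p + Im p = 1 \<Longrightarrow> p = 1" by (simp add: complex_eq_iff)
lemma c2: "Re p = 0 \<Longrightarrow> Re p + Im p = 1 \<Longrightarrow> p = \<i>" by (simp add: complex_eq_iff)
lemma c3: "Re p = 0 \<Longrightarrow> Im p = 0 \<Longrightarrow> p = 0" by (simp add: complex_eq_iff)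

lemma outer_outer:
  assumes "(a = 0 \<and> b = 1) \<or> (a = 1 \<and> b = 2) \<or> (a = 0 \<and> b = 2)" "(a' = 0 \<and> b' = 1) \<or> (a' = 1 \<and> b' = 2) \<or> (a' = 0 \<and> b' = 2)"
    "{Inl a, Inl b} \<noteq> ({Inl a', Inl b'} :: vx set)" "p \<in> segE {Inl a, Inl b}" "p \<in> segE {Inl a', Inl b'}"
  shows "p \<in> pos ` {Inl a, Inl b} \<and> p \<in> pos ` {Inl a', Inl b'}"
proof -
  have ps: "p \<in> closed_segment (std a) (std b)" "p \<in> closed_segment (std a') (std b')" using assms(4,5) by (simp_all add: segE_pair)
  have "(p = std a \<or> p = std b) \<and> (p = std a' \<or> p = std b')"
  proof -
    consider "a = 0" "b = 1" | "a = 1" "b = 2" | "a = 0" "b = 2" using assms(1) by blast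
    then show "(p = std a \<or> p = std b) \<and> (p = std a' \<or> p = std b')"
    proof cases
      case 1
      then have s1: "Im p = 0" "0 \<le> Re p" "Re p \<le> 1" using side01[of p] ps(1) by auto
      consider "a' = 0" "b' = 1" | "a' = 1" "b' = 2" | "a' = 0" "b' = 2" using assms(2) by blast
      then show "(p = std a \<or> p = std b) \<and> (p = std a' \<or> p = std b')"
      proof cases
        case 1 then show "(p = std a \<or> p = std b) \<and> (p = std a' \<or> p = std b')" using assms(3) \<open>a = 0\<close> \<open>b = 1\<close> by auto
      next
        case 2 then have "Re p + Im p = 1" using side12[of p] ps(2) by (auto simp: std2)
        then have "p = 1" using c1 s1 by blast
        then show "(p = std a \<or> p = std b) \<and> (p = std a' \<or> p = std b')" using 2 \<open>a = 0\<close> \<open>b = 1\<close> by auto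
      next
        case 3 then have "Re p = 0" using side02[of p] ps(2) by (auto simp: std2)
        then have "p = 0" using c3 s1 by blast
        then show "(p = std a \<or> p = std b) \<and> (p = std a' \<or> p = std b')" using 3 \<open>a = 0\<close> \<open>b = 1\<close> by auto
      qed
    next
      case 2
      then have s1: "Re p + Im p = 1" using side12[of p] ps(1) by (auto simp: std2)
      consider "a' = 0" "b' = 1" | "a' = 1" "b' = 2" | "a' = 0" "b' = 2" using assms(2) by blast
      then show "(p = std a \<or> p = std b) \<and> (p = std a' \<or> p = std b')"
      proof cases
        case 1 then have "Im p = 0" using side01[of p] ps(2) by auto
        then have "p = 1" using c1 s1 by blast
        then show "(p = std a \<or> p = std b) \<and> (p = std a' \<or> p = std b')" using 1 \<open>a = 1\<close> \<open>b = 2\<close> by auto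
      next
        case 2 then show "(p = std a \<or> p = std b) \<and> (p = std a' \<or> p = std b')" using assms(3) \<open>a = 1\<close> \<open>b = 2\<close> by auto
      next
        case 3 then have "Re p = 0" using side02[of p] ps(2) by (auto simp: std2)
        then have "p = \<i>" using c2 s1 by blast
        then show "(p = std a \<or> p = std b) \<and> (p = std a' \<or> p = std b')" using 3 \<open>a = 1\<close> \<open>b = 2\<close> by (auto simp: std2)
      qed
    next
      case 3
      then have s1: "Re p = 0" using side02[of p] ps(1) by (auto simp: std2)
      consider "a' = 0" "b' = 1" | "a' = 1" "b' = 2" | "a' = 0" "b' = 2" using assms(2) by blast
      then show "(p = std a \<or> p = std b) \<and> (p = std a' \<or> p = std b')"
      proof cases
        case 1 then have "Im p = 0" using side01[of p] ps(2) by auto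
        then have "p = 0" using c3 s1 by blast
        then show "(p = std a \<or> p = std b) \<and> (p = std a' \<or> p = std b')" using 1 \<open>a = 0\<close> \<open>b = 2\<close> by auto
      next
        case 2 then have "Re p + Im p = 1" using side12[of p] ps(2) by (auto simp: std2)
        then have "p = \<i>" using c2 s1 by blast
        then show "(p = std a \<or> p = std b) \<and> (p = std a' \<or> p = std b')" using 2 \<open>a = 0\<close> \<open>b = 2\<close> by (auto simp: std2)
      next
        case 3 then show "(p = std a \<or> p = std b) \<and> (p = std a' \<or> p = std b')" using assms(3) \<open>a = 0\<close> \<open>b = 2\<close> by auto
      qed
    qed
  qed
  then show ?thesis by auto
qed

lemma EA_cases2: "e \<in> EA D \<Longrightarrow> (\<exists>a b. ((a = 0 \<and> b = 1) \<or> (a = 1 \<and> b = 2) \<or> (a = 0 \<and> b = 2)) \<and> e = {Inl a, Inl b})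
   \<or> (\<exists>u j. u \<in> Wd D \<and> j < 3 \<and> e = {Inr u, cor u j})"
proof -
  assume "e \<in> EA D"
  from EA_cases[OF this] show ?thesis
  proof (elim disjE)
    assume "e = {Inl 0, Inl 1}" then show ?thesis by blast
  next
    assume "e = {Inl 1, Inl 2}" then show ?thesis by blast
  next
    assume "e = {Inl 0, Inl 2}" then show ?thesis by blast
  qed blast
qed

lemma EA_int: assumes "e \<in> EA D" "f \<in> EA D" "e \<noteq> f" shows "segE e \<inter> segE f \<subseteq> pos ` (e \<inter> f)"
proof
  fix p assume p: "p \<in> segE e \<inter> segE f"
  have "p \<in> pos ` e \<and> p \<in> pos ` f"
  proof -
    consider (eo) a b where "(a = 0 \<and> b = 1) \<or> (a = 1 \<and> b = 2) \<or> (a = 0 \<and> b = 2)" "e = {Inl a, Inl b}"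
      | (ei) u j where "u \<in> Wd D" "j < 3" "e = {Inr u, cor u j}"
      using EA_cases2[OF assms(1)] by blast
    then show ?thesis
    proof cases
      case eo
      consider (fo) a' b' where "(a' = 0 \<and> b' = 1) \<or> (a' = 1 \<and> b' = 2) \<or> (a' = 0 \<and> b' = 2)" "f = {Inl a', Inl b'}"
        | (fi) u' j' where "u' \<in> Wd D" "j' < 3" "f = {Inr u', cor u' j'}"
        using EA_cases2[OF assms(2)] by blast
      then show ?thesis
      proof cases
        case fo then show ?thesis using outer_outer[OF eo(1) fo(1), of p] p assms(3) eo fo by auto
      next
        case fi then show ?thesis using outer_inner[OF fi(1) fi(2) _ eo(1), of p] p eo fi by auto
      qed
    next
      case ei
      consider (fo) a' b' where "(a' = 0 \<and> b' = 1) \<or> (a' = 1 \<and> b' = 2) \<or> (a' = 0 \<and> b' = 2)" "f = {Inl a', Inl b'}"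
        | (fi) u' j' where "u' \<in> Wd D" "j' < 3" "f = {Inr u', cor u' j'}"
        using EA_cases2[OF assms(2)] by blast
      then show ?thesis
      proof cases
        case fo then show ?thesis using outer_inner[OF ei(1) ei(2) _ fo(1), of p] p ei fo by auto
      next
        case fi
        then have "(u, j) \<noteq> (u', j')" using assms(3) ei by auto
        then show ?thesis using inv_c[OF ei(1) fi(1) ei(2) fi(2)] p ei fi inner_seg inner_pos by auto
      qed
    qed
  qed
  then show "p \<in> pos ` (e \<inter> f)" using common_pt[OF EA_sub[OF assms(1)] EA_sub[OF assms(2)]] by blast
qed


lemma G_inj: "G u a = G u b \<Longrightarrow> a = b"
  by (induction u arbitrary: a b) (auto dest: g_inj)

lemma cor01: "cor u 0 \<noteq> cor u 1"
proof
  assume "cor u 0 = cor u 1"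
  then have "G u (std 0) = G u (std 1)" using pos_cor[of 0 u] pos_cor[of 1 u] by simp
  then have "std 0 = std 1" by (rule G_inj)
  then show False by simp
qed

lemma Inr_edge: "u \<in> Wd D \<Longrightarrow> j < 3 \<Longrightarrow> {Inr u, cor u j} \<in> EA D"
  unfolding EA_def by blast

lemma two_edges: assumes "z \<in> VA D" shows "\<exists>f1 f2. f1 \<in> EA D \<and> f2 \<in> EA D \<and> f1 \<noteq> f2 \<and> z \<in> f1 \<and> z \<in> f2"
proof -
  have o: "{Inl 0, Inl 1} \<in> EA D" "{Inl 1, Inl 2} \<in> EA D" "{Inl 0, Inl 2} \<in> EA D" unfolding EA_def by auto
  from VA_cases[OF assms] show ?thesis
  proof (elim disjE exE bexE conjE)
    fix a assume a: "a < 3" "z = Inl a"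
    then have "a = 0 \<or> a = 1 \<or> a = 2" by auto
    then show ?thesis
    proof (elim disjE)
      assume "a = 0" then show ?thesis using o a by (intro exI[of _ "{Inl 0, Inl 1}"] exI[of _ "{Inl 0, Inl 2}"]) (auto simp: doubleton_eq_iff)
    next
      assume "a = 1" then show ?thesis using o a by (intro exI[of _ "{Inl 0, Inl 1}"] exI[of _ "{Inl 1, Inl 2}"]) (auto simp: doubleton_eq_iff)
    next
      assume "a = 2" then show ?thesis using o a by (intro exI[of _ "{Inl 1, Inl 2}"] exI[of _ "{Inl 0, Inl 2}"]) (auto simp: doubleton_eq_iff)
    qed
  next
    fix u assume u: "u \<in> Wd D" "z = Inr u"
    have "{Inr u, cor u 0} \<noteq> {Inr u, cor u 1}" using cor01[of u] cor_ne[of u 0] cor_ne[of u 1] by (auto simp: doubleton_eq_iff)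
    moreover have "{Inr u, cor u 0} \<in> EA D" "{Inr u, cor u 1} \<in> EA D" using Inr_edge[OF u(1)] by simp_all
    ultimately show ?thesis using u(2) by (intro exI[of _ "{Inr u, cor u 0}"] exI[of _ "{Inr u, cor u 1}"]) simp
  qed
qed

lemma vertex_cond: assumes "e \<in> EA D" "z \<in> VA D" "pos z \<in> segE e" shows "z \<in> e"
proof -
  obtain f1 f2 where f: "f1 \<in> EA D" "f2 \<in> EA D" "f1 \<noteq> f2" "z \<in> f1" "z \<in> f2" using two_edges[OF assms(2)] by blast
  obtain f where ff: "f \<in> EA D" "f \<noteq> e" "z \<in> f"
  proof (cases "f1 = e")
    case True then show ?thesis using that[of f2] f by auto
  next
    case False then show ?thesis using that[of f1] f by auto
  qed
  have "pos z \<in> segE f" using ff(3) unfolding segE_def by (meson hull_inc imageI)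
  then have "pos z \<in> pos ` (e \<inter> f)" using EA_int[OF assms(1) ff(1) ff(2)[symmetric]] assms(3) by blast
  then obtain t where t: "t \<in> e \<inter> f" "pos z = pos t" by auto
  have "t \<in> VA D" using t EA_sub assms(1) by blast
  then have "z = t" using pos_inj[of D] assms(2) t(2) by (auto dest: inj_onD)
  then show ?thesis using t by blast
qed

definition VN :: "nat \<Rightarrow> nat set" where "VN D = to_nat ` VA D"
definition EN :: "nat \<Rightarrow> nat set set" where "EN D = (\<lambda>e. to_nat ` e) ` EA D"

lemma minmax2: "(a::nat) \<noteq> b \<Longrightarrow> {Min {a,b}, Max {a,b}} = {a,b}"
  by (cases "a \<le> b") (auto simp: min_def max_def)

lemma planar_N: "planar (VN D) (EN D)"
proof -
  define posN where "posN = (\<lambda>n. pos (from_nat n :: vx))"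
  define \<gamma> where "\<gamma> = (\<lambda>e::nat set. linepath (posN (Min e)) (posN (Max e)))"
  have posN: "posN (to_nat x) = pos x" for x :: vx by (simp add: posN_def)
  have finV: "finite (VN D)" unfolding VN_def VA_def using finite_Wd by simp
  have edge: "\<exists>x y. x \<in> VA D \<and> y \<in> VA D \<and> x \<noteq> y \<and> e0 = {x,y} \<and> e = {to_nat x, to_nat y}"
    if "e = to_nat ` e0" "e0 \<in> EA D" for e e0
    using EA_sg[OF that(2)] that(1) by auto
  have sg: "\<forall>e\<in>EN D. \<exists>u v. u \<in> VN D \<and> v \<in> VN D \<and> u \<noteq> v \<and> e = {u, v}"
  proof
    fix e assume "e \<in> EN D"
    then obtain e0 where e0: "e0 \<in> EA D" "e = to_nat ` e0" unfolding EN_def by blast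
    obtain x y where xy: "x \<in> VA D" "y \<in> VA D" "x \<noteq> y" "e = {to_nat x, to_nat y}" using edge[OF e0(2) e0(1)] by blast
    then show "\<exists>u v. u \<in> VN D \<and> v \<in> VN D \<and> u \<noteq> v \<and> e = {u, v}" unfolding VN_def by (auto intro!: exI[of _ "to_nat x"] exI[of _ "to_nat y"])
  qed
  have inj: "inj_on posN (VN D)"
    unfolding VN_def by (rule inj_onI) (auto simp: posN dest: inj_onD[OF pos_inj])
  have img: "posN ` (to_nat ` A) = pos ` A" for A :: "vx set" by (auto simp: posN image_iff)
  have edgeprops: "arc (\<gamma> e) \<and> {pathstart (\<gamma> e), pathfinish (\<gamma> e)} = posN ` e \<and>
                 path_image (\<gamma> e) \<inter> posN ` (VN D) = posN ` e \<and> path_image (\<gamma> e) = segE e0"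
    if e0: "e0 \<in> EA D" "e = to_nat ` e0" for e e0
  proof -
    obtain x y where xy: "x \<in> VA D" "y \<in> VA D" "x \<noteq> y" "e0 = {x,y}" "e = {to_nat x, to_nat y}" using edge[OF e0(2) e0(1)] by blast
    have ne: "to_nat x \<noteq> to_nat y" using xy(3) by simp
    have mm: "{Min e, Max e} = e" using minmax2[OF ne] xy(5) by simp
    have pe: "posN ` e = pos ` e0" using img e0(2) by simp
    have "posN (Min e) \<noteq> posN (Max e)"
    proof
      assume "posN (Min e) = posN (Max e)"
      moreover have "Min e \<in> VN D" "Max e \<in> VN D" using mm xy unfolding VN_def by auto
      ultimately have "Min e = Max e" using inj by (auto dest: inj_onD)
      then have "e = {Min e}" using mm by simp
      moreover have "to_nat x \<in> e" "to_nat y \<in> e" using xy(5) by auto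
      ultimately have "to_nat x = Min e" "to_nat y = Min e" by auto
      then show False using ne by simp
    qed
    then have arc: "arc (\<gamma> e)" unfolding \<gamma>_def by simp
    have pm: "posN ` e = {posN (Min e), posN (Max e)}"
    proof -
      have "posN ` e = posN ` {Min e, Max e}" using mm by simp
      then show ?thesis by simp
    qed
    have se: "{pathstart (\<gamma> e), pathfinish (\<gamma> e)} = posN ` e" unfolding \<gamma>_def pm by simp
    have pim: "path_image (\<gamma> e) = segE e0"
    proof -
      have "path_image (\<gamma> e) = convex hull {posN (Min e), posN (Max e)}" unfolding \<gamma>_def by (simp add: segment_convex_hull)
      also have "{posN (Min e), posN (Max e)} = posN ` e" using pm by simp
      finally show ?thesis using pe unfolding segE_def by simp
    qed
    have "path_image (\<gamma> e) \<inter> posN ` (VN D) = posN ` e"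
    proof
      show "path_image (\<gamma> e) \<inter> posN ` VN D \<subseteq> posN ` e"
      proof
        fix p assume p: "p \<in> path_image (\<gamma> e) \<inter> posN ` VN D"
        then obtain z where z: "z \<in> VA D" "p = pos z" unfolding VN_def using posN by auto
        then have "z \<in> e0" using vertex_cond[OF e0(1) z(1)] p pim by auto
        then show "p \<in> posN ` e" using z pe by auto
      qed
      show "posN ` e \<subseteq> path_image (\<gamma> e) \<inter> posN ` VN D"
      proof -
        have "{pathstart (\<gamma> e), pathfinish (\<gamma> e)} \<subseteq> path_image (\<gamma> e)"
          by (simp add: pathstart_in_path_image pathfinish_in_path_image)
        then have "posN ` e \<subseteq> path_image (\<gamma> e)" using se by simp
        moreover have "e \<subseteq> VN D" using xy unfolding VN_def by auto
        ultimately show ?thesis by auto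
      qed
    qed
    then show ?thesis using arc se pim by blast
  qed
  show ?thesis unfolding planar_def simple_graph_def
  proof (intro conjI exI[of _ posN] exI[of _ \<gamma>])
    show "finite (VN D)" by (rule finV)
    show "\<forall>e\<in>EN D. \<exists>u v. u \<in> VN D \<and> v \<in> VN D \<and> u \<noteq> v \<and> e = {u, v}" by (rule sg)
    show "inj_on posN (VN D)" by (rule inj)
    show "\<forall>e\<in>EN D. arc (\<gamma> e) \<and> {pathstart (\<gamma> e), pathfinish (\<gamma> e)} = posN ` e \<and>
                 path_image (\<gamma> e) \<inter> posN ` (VN D) = posN ` e"
    proof (rule ballI)
      fix e assume "e \<in> EN D"
      then obtain e0 where e0: "e0 \<in> EA D" "e = to_nat ` e0" unfolding EN_def by blast
      show "arc (\<gamma> e) \<and> {pathstart (\<gamma> e), pathfinish (\<gamma> e)} = posN ` e \<and>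
                 path_image (\<gamma> e) \<inter> posN ` (VN D) = posN ` e" using edgeprops[OF e0] by blast
    qed
    show "\<forall>e\<in>EN D. \<forall>f\<in>EN D. e \<noteq> f \<longrightarrow> path_image (\<gamma> e) \<inter> path_image (\<gamma> f) \<subseteq> posN ` (e \<inter> f)"
    proof (intro ballI impI)
      fix e f assume ef: "e \<in> EN D" "f \<in> EN D" "e \<noteq> f"
      obtain e0 where e0: "e0 \<in> EA D" "e = to_nat ` e0" using ef(1) unfolding EN_def by blast
      obtain f0 where f0: "f0 \<in> EA D" "f = to_nat ` f0" using ef(2) unfolding EN_def by blast
      have "e0 \<noteq> f0" using ef(3) e0 f0 by auto
      then have "segE e0 \<inter> segE f0 \<subseteq> pos ` (e0 \<inter> f0)" by (rule EA_int[OF e0(1) f0(1)])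
      moreover have "e \<inter> f = to_nat ` (e0 \<inter> f0)" using e0(2) f0(2) by (simp add: image_Int)
      ultimately show "path_image (\<gamma> e) \<inter> path_image (\<gamma> f) \<subseteq> posN ` (e \<inter> f)"
        using edgeprops[OF e0] edgeprops[OF f0] img by simp
    qed
  qed
qed


lemma EN_edge: "{x,y} \<in> EA D \<Longrightarrow> {to_nat x, to_nat y} \<in> EN D"
  unfolding EN_def by (rule image_eqI[of _ _ "{x,y}"]) auto

definition rr :: "nat \<Rightarrow> nat" where "rr k = (if k = 0 then 2 else if k = 1 then 0 else 1)"

lemma cor_Cons: "cor (k#w) j = (if j = rr k then Inr w else cor w j)"
  by (simp add: rr_def)

lemma corner_edge: "set w \<subseteq> {0,1,2} \<Longrightarrow> length w \<le> D \<Longrightarrow> j < 3 \<Longrightarrow> j' < 3 \<Longrightarrow> j \<noteq> j' \<Longrightarrow> {cor w j, cor w j'} \<in> EA D"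
proof (induction w arbitrary: j j')
  case Nil
  have o: "{Inl 0, Inl 1} \<in> EA D" "{Inl 1, Inl 2} \<in> EA D" "{Inl 0, Inl 2} \<in> EA D" unfolding EA_def by blast+
  then have o': "{Inl 1, Inl 0} \<in> EA D" "{Inl 2, Inl 1} \<in> EA D" "{Inl 2, Inl 0} \<in> EA D" by (simp_all add: insert_commute)
  have "(j=0 \<and> j'=1) \<or> (j=1 \<and> j'=0) \<or> (j=1 \<and> j'=2) \<or> (j=2 \<and> j'=1) \<or> (j=0 \<and> j'=2) \<or> (j=2 \<and> j'=0)"
    using Nil by arith
  then show ?case using o o' by (elim disjE) simp_all
next
  case (Cons k w)
  have w: "w \<in> Wd D" using Cons.prems by (auto simp: Wd_def)
  show ?case
  proof (cases "j = rr k")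
    case True
    then have j': "j' \<noteq> rr k" using Cons.prems by auto
    have "cor (k#w) j = Inr w" by (subst cor_Cons) (simp add: True)
    moreover have "cor (k#w) j' = cor w j'" by (subst cor_Cons) (simp add: j')
    ultimately show ?thesis using Inr_edge[OF w Cons.prems(4)] by simp
  next
    case False
    have c1: "cor (k#w) j = cor w j" by (subst cor_Cons) (simp add: False)
    show ?thesis
    proof (cases "j' = rr k")
      case True
      have "cor (k#w) j' = Inr w" by (subst cor_Cons) (simp add: True)
      then show ?thesis using c1 Inr_edge[OF w Cons.prems(3)] by (simp add: insert_commute)
    next
      case F2: False
      have "cor (k#w) j' = cor w j'" by (subst cor_Cons) (simp add: F2)
      moreover have "{cor w j, cor w j'} \<in> EA D" using Cons.IH Cons.prems by auto
      ultimately show ?thesis using c1 by simp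
    qed
  qed
qed

lemma cor_rep: "j \<noteq> 2 \<Longrightarrow> cor (replicate i 0 @ w) j = cor w j"
  by (induction i) auto

abbreviation chainq :: "nat list \<Rightarrow> nat \<Rightarrow> nat" where
  "chainq w i \<equiv> to_nat (Inr (replicate i 0 @ w) :: vx)"

lemma rep_Wd: "set w \<subseteq> {0,1,2} \<Longrightarrow> i + length w < D \<Longrightarrow> replicate i 0 @ w \<in> Wd D"
  by (auto simp: Wd_def)

lemma book_face:
  assumes w: "set w \<subseteq> {0,1,2}" "length w + m \<le> D"
  shows "book (EN D) m (to_nat (cor w 0)) (to_nat (cor w 1)) (map (chainq w) [0..<m])"
  unfolding book_def
proof (intro conjI)
  show "{to_nat (cor w 0), to_nat (cor w 1)} \<in> EN D"
    using corner_edge[OF w(1), of D 0 1] w(2) by (intro EN_edge) auto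
  show "length (map (chainq w) [0..<m]) = m" by simp
  show "distinct (map (chainq w) [0..<m])"
  proof (rule distinct_map[THEN iffD2], intro conjI)
    show "inj_on (chainq w) (set [0..<m])"
    proof (rule inj_onI)
      fix i i' assume "chainq w i = chainq w i'"
      then have "replicate i 0 @ w = replicate i' 0 @ w" by simp
      then have "length (replicate i 0 @ w) = length (replicate i' 0 @ w)" by simp
      then show "i = i'" by simp
    qed
  qed simp
  show "\<forall>q\<in>set (map (chainq w) [0..<m]). {to_nat (cor w 0), q} \<in> EN D \<and> {to_nat (cor w 1), q} \<in> EN D"
  proof
    fix q assume "q \<in> set (map (chainq w) [0..<m])"
    then obtain i where i: "i < m" "q = chainq w i" by auto
    have v: "replicate i 0 @ w \<in> Wd D" using rep_Wd[OF w(1)] i(1) w(2) by simp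
    have "{Inr (replicate i 0 @ w), cor (replicate i 0 @ w) 0} \<in> EA D" "{Inr (replicate i 0 @ w), cor (replicate i 0 @ w) 1} \<in> EA D"
      using Inr_edge[OF v] by auto
    then have "{cor w 0, Inr (replicate i 0 @ w)} \<in> EA D" "{cor w 1, Inr (replicate i 0 @ w)} \<in> EA D"
      by (simp_all add: cor_rep insert_commute)
    then show "{to_nat (cor w 0), q} \<in> EN D \<and> {to_nat (cor w 1), q} \<in> EN D" using i EN_edge by blast
  qed
  show "successively (\<lambda>x y. {x, y} \<in> EN D) (map (chainq w) [0..<m])"
    unfolding successively_conv_nth
  proof (intro allI impI)
    fix i assume i: "Suc i < length (map (chainq w) [0..<m])"
    then have im: "Suc i < m" by simp
    have v: "0 # (replicate i 0 @ w) \<in> Wd D" using rep_Wd[OF w(1), of "Suc i"] im w(2) by simp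
    have "{Inr (0 # (replicate i 0 @ w)), cor (0 # (replicate i 0 @ w)) 2} \<in> EA D" using Inr_edge[OF v, of 2] by simp
    then have "{Inr (replicate i 0 @ w), Inr (0 # (replicate i 0 @ w))} \<in> EA D" by (simp add: insert_commute)
    then have "{chainq w i, chainq w (Suc i)} \<in> EN D" using EN_edge by fastforce
    then show "{map (chainq w) [0..<m] ! i, map (chainq w) [0..<m] ! Suc i} \<in> EN D" using im by simp
  qed
qed

lemma rich_face: "set w \<subseteq> {0,1,2} \<Longrightarrow> length w + Suc n * m \<le> D \<Longrightarrow> rich (EN D) m n (to_nat (cor w 0)) (to_nat (cor w 1))"
proof (induction n arbitrary: w)
  case 0
  then show ?case using book_face[OF 0(1)] by auto
next
  case (Suc n)
  have b: "book (EN D) m (to_nat (cor w 0)) (to_nat (cor w 1)) (map (chainq w) [0..<m])"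
    using book_face[OF Suc.prems(1)] Suc.prems(2) by simp
  have ch: "rich (EN D) m n (to_nat (cor w 0)) q \<and> rich (EN D) m n (to_nat (cor w 1)) q"
    if q: "q \<in> set (map (chainq w) [0..<m])" for q
  proof -
    obtain i where i: "i < m" "q = chainq w i" using q by auto
    define v where "v = replicate i 0 @ w"
    have sv: "set (2 # v) \<subseteq> {0,1,2}" "set (1 # v) \<subseteq> {0,1,2}" using Suc.prems(1) unfolding v_def by auto
    have "length (2 # v) + Suc n * m \<le> D" "length (1 # v) + Suc n * m \<le> D"
      using Suc.prems(2) i(1) unfolding v_def by (simp_all add: algebra_simps)
    then have r1: "rich (EN D) m n (to_nat (cor (2#v) 0)) (to_nat (cor (2#v) 1))"
      and r2: "rich (EN D) m n (to_nat (cor (1#v) 0)) (to_nat (cor (1#v) 1))"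
      using Suc.IH sv by blast+
    have cc: "cor (2#v) 0 = cor w 0" "cor (2#v) 1 = Inr v" "cor (1#v) 0 = Inr v" "cor (1#v) 1 = cor w 1"
      unfolding v_def by (simp_all add: cor_rep)
    have a1: "rich (EN D) m n (to_nat (cor w 0)) (to_nat (Inr v :: vx))" using r1 unfolding cc(1) cc(2) .
    have a2: "rich (EN D) m n (to_nat (Inr v :: vx)) (to_nat (cor w 1))" using r2 unfolding cc(3) cc(4) .
    have q: "q = to_nat (Inr v :: vx)" using i(2) unfolding v_def by simp
    show ?thesis using a1 a2 rich_sym[of "EN D" m n "to_nat (Inr v :: vx)" "to_nat (cor w 1)"] q by simp
  qed
  show ?case using b ch by auto
qed

theorem lemma4p4:
  fixes c :: nat
  shows "\<exists>(V :: nat set) E. planar V E \<and>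
    (\<forall>P Q. tree_partition V E P \<and> is_partition V Q \<and>
        (\<forall>X\<in>P. \<forall>Y\<in>Q. card (X \<inter> Y) \<le> c) \<longrightarrow>
      (\<exists>v1 v2 v3 v4 Q1 Q2 Q3 Q4.
         {v1, v2} \<in> E \<and> {v1, v3} \<in> E \<and> {v1, v4} \<in> E \<and>
         {v2, v3} \<in> E \<and> {v2, v4} \<in> E \<and> {v3, v4} \<in> E \<and>
         Q1 \<in> Q \<and> Q2 \<in> Q \<and> Q3 \<in> Q \<and> Q4 \<in> Q \<and>
         v1 \<in> Q1 \<and> v2 \<in> Q2 \<and> v3 \<in> Q3 \<and> v4 \<in> Q4 \<and>
         Q1 \<noteq> Q2 \<and> Q1 \<noteq> Q3 \<and> Q1 \<noteq> Q4 \<and> Q2 \<noteq> Q3 \<and> Q2 \<noteq> Q4 \<and> Q3 \<noteq> Q4))"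
proof -
  define M where "M = 8*c*c+6*c+1"
  define D where "D = 3*M"
  have pl: "planar (VN D) (EN D)" by (rule planar_N)
  have sgr: "simple_graph (VN D) (EN D)" using pl unfolding planar_def by blast
  have rich2: "rich (EN D) M 2 (to_nat (cor [] 0)) (to_nat (cor [] 1))"
    by (rule rich_face) (simp_all add: D_def)
  show ?thesis
  proof (intro exI[of _ "VN D"] exI[of _ "EN D"] conjI allI impI)
    show "planar (VN D) (EN D)" by (rule pl)
    fix P Q assume H: "tree_partition (VN D) (EN D) P \<and> is_partition (VN D) Q \<and> (\<forall>X\<in>P. \<forall>Y\<in>Q. card (X \<inter> Y) \<le> c)"
    interpret s: setting "VN D" "EN D" P Q c
      using sgr H unfolding simple_graph_def by unfold_locales auto
    have "rainbow (EN D) Q" using s.main_comb rich2 unfolding M_def by blast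
    then show "\<exists>v1 v2 v3 v4 Q1 Q2 Q3 Q4.
         {v1, v2} \<in> EN D \<and> {v1, v3} \<in> EN D \<and> {v1, v4} \<in> EN D \<and>
         {v2, v3} \<in> EN D \<and> {v2, v4} \<in> EN D \<and> {v3, v4} \<in> EN D \<and>
         Q1 \<in> Q \<and> Q2 \<in> Q \<and> Q3 \<in> Q \<and> Q4 \<in> Q \<and>
         v1 \<in> Q1 \<and> v2 \<in> Q2 \<and> v3 \<in> Q3 \<and> v4 \<in> Q4 \<and>
         Q1 \<noteq> Q2 \<and> Q1 \<noteq> Q3 \<and> Q1 \<noteq> Q4 \<and> Q2 \<noteq> Q3 \<and> Q2 \<noteq> Q4 \<and> Q3 \<noteq> Q4"
      unfolding rainbow_def .
  qed
qed


end
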